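(* Assume Assumptions 1 and 2 hold, $\Delta=\{\delta:\|\delta\|_2\le\varepsilon\}$, and that with probability 1 every gradient $\nabla_\delta h(w,\delta;z)$ evaluated during training satisfies $\|\nabla_\delta h(w,\delta;z)\|\ge1/\psi$ for a constant $\psi>0$. Let $S,S'$ be datasets of size $n$ differing only in one sample $s$, and consider coupled runs of $A_{\text{Fast}}$ with iterates $w_t,w'_t$ and $d^{(w)}_t=\|w_t-w'_t\|$. Then for every step $t$, $$\mathbb E[d^{(w)}_t]\le\big(1+\alpha_{w,t}\beta(1+\tilde\alpha_\delta\varepsilon\psi\beta)\big)\mathbb E[d^{(w)}_{t-1}]+\frac2n\alpha_{w,t}L.$$
   Context: Loss $h(w,\delta;z)$, $w\in W$ Euclidean, Euclidean norms. Assumption 1: for every $z$, and all $w,w'\in W$, $\delta,\delta'\in\Delta$: $|h(w,\delta;z)-h(w',\delta';z)|^2\le L^2(\|w-w'\|^2+\|\delta-\delta'\|^2)$ and $|h(w,\delta;z)-h(w',\delta;z)|\le L_w\|w-w'\|$. Assumption 2: for every $z$, $h(\cdot,\cdot;z)$ is continuously differentiable and $\|\nabla_w h(w,\delta;z)-\nabla_w h(w',\delta';z)\|^2+\|\nabla_\delta h(w,\delta;z)-\nabla_\delta h(w',\delta';z)\|^2\le\beta^2(\|w-w'\|^2+\|\delta-\delta'\|^2)$. Operators: $\mathcal P_\Delta(g)=\arg\min_{\delta\in\Delta}\|g-\delta\|$ and $\pi_\Delta(g)=\varepsilon g/\|g\|$ (the nearest extreme point of $\Delta$). Algorithm $A_{\text{Fast}}$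 (batch size $b$, step sizes $\alpha_{w,t}$, attack step size $\tilde\alpha_\delta$): for $t=1,\dots,T$: draw a uniformly random mini-batch $B_t\subset S$ of size $b$; for each $z_j\in B_t$ draw $\tilde\delta_j$ uniformly in $\Delta$ and set $\delta_j=\mathcal P_\Delta(\tilde\delta_j+\tilde\alpha_\delta\pi_\Delta(\nabla_\delta h(w_{t-1},\tilde\delta_j;z_j)))$; set $w_t=w_{t-1}-\frac{\alpha_{w,t}}{b}\sum_{z_j\in B_t}\nabla_w h(w_{t-1},\delta_j;z_j)$. Coupling: both runs use the same initialization, the same mini-batch index sets (so batches differ only when $s\in B_t$, probability $b/n$) and the same random starts $\tilde\delta_j$. *)

theory Defs
  imports "HOL-Probability.Probability"
begin

abbreviation Delta :: "real \<Rightarrow> 'd::euclidean_space set" where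
  "Delta eps \<equiv> cball 0 eps"

definition proj_Delta :: "real \<Rightarrow> 'd::euclidean_space \<Rightarrow> 'd" where
  "proj_Delta eps g = closest_point (Delta eps) g"

definition pi_Delta :: "real \<Rightarrow> 'd::euclidean_space \<Rightarrow> 'd" where
  "pi_Delta eps g = (eps / norm g) *\<^sub>R g"

text \<open>One step of A_Fast: given current iterate w, mini-batch index set B,
  random starts D j (for sample index j), dataset Z, step size a.\<close>
definition fast_step ::
  "('w::euclidean_space \<Rightarrow> 'd::euclidean_space \<Rightarrow> 'z \<Rightarrow> 'w) \<Rightarrow> ('w \<Rightarrow> 'd \<Rightarrow> 'z \<Rightarrow> 'd) \<Rightarrow>
   real \<Rightarrow> real \<Rightarrow> nat \<Rightarrow> (nat \<Rightarrow> 'z) \<Rightarrow> real \<Rightarrow> 'w \<Rightarrow> nat set \<Rightarrow> (nat \<Rightarrow> 'd) \<Rightarrow> 'w" where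
  "fast_step gw gd eps a_delta b Z a w B D =
     w - (a / real b) *\<^sub>R
       (\<Sum>j\<in>B. gw w (proj_Delta eps (D j + a_delta *\<^sub>R pi_Delta eps (gd w (D j) (Z j)))) (Z j))"

primrec fast_iter ::
  "('w::euclidean_space \<Rightarrow> 'd::euclidean_space \<Rightarrow> 'z \<Rightarrow> 'w) \<Rightarrow> ('w \<Rightarrow> 'd \<Rightarrow> 'z \<Rightarrow> 'd) \<Rightarrow>
   real \<Rightarrow> real \<Rightarrow> nat \<Rightarrow> (nat \<Rightarrow> 'z) \<Rightarrow> (nat \<Rightarrow> real) \<Rightarrow> 'w \<Rightarrow>
   (nat \<Rightarrow> nat set) \<Rightarrow> (nat \<Rightarrow> nat \<Rightarrow> 'd) \<Rightarrow> nat \<Rightarrow> 'w" where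
  "fast_iter gw gd eps a_delta b Z alpha w0 Bs Ds 0 = w0"
| "fast_iter gw gd eps a_delta b Z alpha w0 Bs Ds (Suc t) =
     fast_step gw gd eps a_delta b Z (alpha (Suc t))
       (fast_iter gw gd eps a_delta b Z alpha w0 Bs Ds t) (Bs (Suc t)) (Ds (Suc t))"

definition step_dist :: "nat \<Rightarrow> nat \<Rightarrow> real \<Rightarrow> (nat set \<times> (nat \<Rightarrow> 'd::euclidean_space)) measure" where
  "step_dist n b eps =
     measure_pmf (pmf_of_set {B. B \<subseteq> {..<n} \<and> card B = b})
       \<Otimes>\<^sub>M (\<Pi>\<^sub>M j\<in>{..<n}. uniform_measure lborel (Delta eps))"

end

theory Submission
  imports Defs
begin


lemma unit_diff_aux:
  fixes u v :: "'a::real_inner"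
  assumes c0: "0 < norm v" and vu: "norm v \<le> norm u"
  shows "norm (u /\<^sub>R norm u - v /\<^sub>R norm v) \<le> norm (u - v) / norm v"
proof -
  define a where "a = norm u"
  define c where "c = norm v"
  define p where "p = inner u v"
  have a0: "a > 0" "c > 0" "c \<le> a" using assms by (auto simp: a_def c_def)
  have pa: "p \<le> a * c" unfolding p_def a_def c_def by (rule norm_cauchy_schwarz)
  have uu: "inner u u = a\<^sup>2" "inner v v = c\<^sup>2"
    by (simp_all add: a_def c_def power2_norm_eq_inner)
  have "(norm (u /\<^sub>R a - v /\<^sub>R c))\<^sup>2 = inner (u /\<^sub>R a - v /\<^sub>R c) (u /\<^sub>R a - v /\<^sub>R c)"
    by (simp add: power2_norm_eq_inner)
  also have "\<dots> = inner u u / a\<^sup>2 - 2 * p / (a * c) + inner v v / c\<^sup>2"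
    by (simp add: inner_diff_left inner_diff_right inner_commute p_def power2_eq_square algebra_simps divide_inverse)
  also have "\<dots> = 2 - 2 * p / (a * c)" using a0 uu by simp
  finally have lhs: "(norm (u /\<^sub>R a - v /\<^sub>R c))\<^sup>2 = 2 - 2 * p / (a * c)" .
  have "(norm (u - v))\<^sup>2 = inner (u - v) (u - v)" by (simp add: power2_norm_eq_inner)
  also have "\<dots> = a\<^sup>2 + c\<^sup>2 - 2 * p"
    using uu by (simp add: inner_diff_left inner_diff_right inner_commute p_def)
  finally have rhs: "(norm (u - v) / c)\<^sup>2 = (a\<^sup>2 + c\<^sup>2 - 2 * p) / c\<^sup>2"
    by (simp add: power_divide)
  have key: "2 - 2 * p / (a * c) \<le> (a\<^sup>2 + c\<^sup>2 - 2 * p) / c\<^sup>2"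
  proof -
    have "(a - c) * (a * (a + c) - 2 * p) \<ge> 0"
    proof (rule mult_nonneg_nonneg)
      show "a - c \<ge> 0" using a0 by simp
      have "a * c \<le> a * a" using a0 by (intro mult_left_mono) auto
      then show "a * (a + c) - 2 * p \<ge> 0" using pa by (simp add: algebra_simps)
    qed
    moreover have "(a\<^sup>2+c\<^sup>2-2*p)/c\<^sup>2 - (2 - 2*p/(a*c)) = (a-c)*(a*(a+c) - 2*p)/(a*c\<^sup>2)"
      using a0 by (simp add: field_simps power2_eq_square)
    moreover have "0 \<le> a*c\<^sup>2" using a0 by simp
    ultimately show ?thesis by (metis diff_ge_0_iff_ge divide_nonneg_nonneg)
  qed
  have "(norm (u /\<^sub>R a - v /\<^sub>R c))\<^sup>2 \<le> (norm (u - v) / c)\<^sup>2"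
    using lhs rhs key by simp
  then have "norm (u /\<^sub>R a - v /\<^sub>R c) \<le> norm (u - v) / c"
    by (rule power2_le_imp_le) (use a0 in simp)
  then show ?thesis by (simp only: a_def c_def)
qed

lemma deriv_norm_le:
  fixes f :: "'a::real_inner \<Rightarrow> real"
  assumes d: "(f has_derivative (\<lambda>v. inner g v)) (at x)"
    and lip: "\<And>y. \<bar>f y - f x\<bar> \<le> L * norm (y - x)" and L0: "0 \<le> L"
  shows "norm g \<le> L"
proof (cases "g = 0")
  case True then show ?thesis using L0 by simp
next
  case False
  define \<phi> where "\<phi> t = f (x + t *\<^sub>R g)" for t :: real
  have l: "((\<lambda>t::real. x + t *\<^sub>R g) has_derivative (\<lambda>t. t *\<^sub>R g)) (at 0)"
    by (auto intro!: derivative_eq_intros)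
  have d': "(f has_derivative (\<lambda>v. inner g v)) (at ((\<lambda>t::real. x + t *\<^sub>R g) 0))"
    using d by simp
  have "(\<phi> has_derivative (\<lambda>t. inner g (t *\<^sub>R g))) (at 0)"
    unfolding \<phi>_def using has_derivative_compose[OF l d'] by (simp add: o_def)
  then have "(\<phi> has_derivative (\<lambda>t. t * (norm g)\<^sup>2)) (at 0)"
    by (simp add: power2_norm_eq_inner)
  then have "(\<phi> has_field_derivative (norm g)\<^sup>2) (at 0)"
    unfolding has_field_derivative_def by (simp add: mult.commute[of _ "(norm g)\<^sup>2"])
  then have lim: "((\<lambda>h. (\<phi> (0 + h) - \<phi> 0) / h) \<longlongrightarrow> (norm g)\<^sup>2) (at 0)"
    by (simp add: DERIV_def)
  have ev: "\<forall>\<^sub>F h in at 0. \<bar>(\<phi> (0 + h) - \<phi> 0) / h\<bar> \<le> L * norm g"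
  proof -
    have "\<forall>\<^sub>F h in at (0::real). h \<noteq> 0" by (simp add: eventually_at_filter)
    moreover have "\<bar>(\<phi> (0 + h) - \<phi> 0) / h\<bar> \<le> L * norm g" if "h \<noteq> 0" for h
    proof -
    have "\<bar>\<phi> h - \<phi> 0\<bar> \<le> L * norm (h *\<^sub>R g)"
      unfolding \<phi>_def using lip[of "x + h *\<^sub>R g"] by simp
    then show ?thesis
      using \<open>h \<noteq> 0\<close> by (simp add: divide_le_eq mult.commute mult.left_commute)
    qed
    ultimately show ?thesis by (rule eventually_mono)
  qed
  have "\<bar>(norm g)\<^sup>2\<bar> \<le> L * norm g"
    by (rule tendsto_upperbound[OF tendsto_rabs[OF lim] ev]) simp
  then have "norm g * norm g \<le> L * norm g" by (simp add: power2_eq_square)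
  then show ?thesis using False by simp
qed

lemma unit_diff:
  fixes u v :: "'a::real_inner"
  assumes m: "0 < m" "m \<le> norm u" "m \<le> norm v" and e: "0 \<le> e"
  shows "norm ((e / norm u) *\<^sub>R u - (e / norm v) *\<^sub>R v) \<le> e * norm (u - v) / m"
proof -
  have n: "norm (u /\<^sub>R norm u - v /\<^sub>R norm v) \<le> norm (u - v) / m"
  proof (cases "norm v \<le> norm u")
    case True
    have "norm (u /\<^sub>R norm u - v /\<^sub>R norm v) \<le> norm (u - v) / norm v"
      using m True by (intro unit_diff_aux) auto
    also have "\<dots> \<le> norm (u - v) / m" using m by (intro divide_left_mono) (auto intro!: mult_pos_pos)
    finally show ?thesis .
  next
    case False
    have "norm (v /\<^sub>R norm v - u /\<^sub>R norm u) \<le> norm (v - u) / norm u"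
      using m False by (intro unit_diff_aux) auto
    also have "\<dots> \<le> norm (v - u) / m" using m by (intro divide_left_mono) (auto intro!: mult_pos_pos)
    finally show ?thesis by (simp only: norm_minus_commute)
  qed
  have eq: "(e / norm u) *\<^sub>R u - (e / norm v) *\<^sub>R v = e *\<^sub>R (u /\<^sub>R norm u - v /\<^sub>R norm v)"
    by (simp add: scaleR_diff_right divide_inverse)
  have "norm ((e / norm u) *\<^sub>R u - (e / norm v) *\<^sub>R v) = e * norm (u /\<^sub>R norm u - v /\<^sub>R norm v)"
    unfolding eq using e by simp
  also have "\<dots> \<le> e * (norm (u - v) / m)" by (rule mult_left_mono[OF n e])
  finally show ?thesis by simp
qed

locale lem7ctx =
  fixes h :: "'w::euclidean_space \<Rightarrow> 'd::euclidean_space \<Rightarrow> 'z \<Rightarrow> real"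
    and gw :: "'w \<Rightarrow> 'd \<Rightarrow> 'z \<Rightarrow> 'w"
    and gd :: "'w \<Rightarrow> 'd \<Rightarrow> 'z \<Rightarrow> 'd"
    and L beta eps :: real
  assumes A1: "\<And>z w w' \<delta> \<delta>'. \<delta> \<in> Delta eps \<Longrightarrow> \<delta>' \<in> Delta eps \<Longrightarrow>
        \<bar>h w \<delta> z - h w' \<delta>' z\<bar>\<^sup>2 \<le> L\<^sup>2 * ((norm (w - w'))\<^sup>2 + (norm (\<delta> - \<delta>'))\<^sup>2)"
    and A2_deriv: "\<And>z w \<delta>. ((\<lambda>p. h (fst p) (snd p) z) has_derivative
           (\<lambda>p. inner (gw w \<delta> z) (fst p) + inner (gd w \<delta> z) (snd p))) (at (w, \<delta>))"
    and A2: "\<And>z w w' \<delta> \<delta>'.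
        (norm (gw w \<delta> z - gw w' \<delta>' z))\<^sup>2 + (norm (gd w \<delta> z - gd w' \<delta>' z))\<^sup>2
          \<le> beta\<^sup>2 * ((norm (w - w'))\<^sup>2 + (norm (\<delta> - \<delta>'))\<^sup>2)"
    and L_nonneg: "0 \<le> L" and beta_nonneg: "0 \<le> beta" and eps_pos: "0 < eps"
begin

lemma gw_bound:
  assumes "\<delta> \<in> Delta eps" shows "norm (gw w \<delta> z) \<le> L"
proof (rule deriv_norm_le[where f = "\<lambda>w'. h w' \<delta> z" and x = w])
  have l: "((\<lambda>v. (v, \<delta>)) has_derivative (\<lambda>v. (v, 0))) (at w)"
    by (auto intro!: derivative_eq_intros)
  have "((\<lambda>p. h (fst p) (snd p) z) has_derivative
           (\<lambda>p. inner (gw w \<delta> z) (fst p) + inner (gd w \<delta> z) (snd p))) (at ((\<lambda>v. (v, \<delta>)) w))"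
    using A2_deriv by simp
  from has_derivative_compose[OF l this]
  show "((\<lambda>w'. h w' \<delta> z) has_derivative (\<lambda>v. inner (gw w \<delta> z) v)) (at w)"
    by (simp add: o_def)
  show "0 \<le> L" by (rule L_nonneg)
  fix y
  have "\<bar>h y \<delta> z - h w \<delta> z\<bar>\<^sup>2 \<le> (L * norm (y - w))\<^sup>2"
    using A1[where z=z and w=y and w'=w and \<delta>=\<delta> and \<delta>'=\<delta>] assms by (simp add: power_mult_distrib)
  then show "\<bar>h y \<delta> z - h w \<delta> z\<bar> \<le> L * norm (y - w)"
    by (rule power2_le_imp_le) (use L_nonneg in simp)
qed

lemma gw_lip: "norm (gw w \<delta> z - gw w' \<delta>' z) \<le> beta * (norm (w - w') + norm (\<delta> - \<delta>'))"
proof -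
  have "(norm (gw w \<delta> z - gw w' \<delta>' z))\<^sup>2 \<le> beta\<^sup>2 * ((norm (w - w'))\<^sup>2 + (norm (\<delta> - \<delta>'))\<^sup>2)"
    using A2[of w \<delta> z w' \<delta>'] by (smt (verit) zero_le_power2)
  also have "\<dots> \<le> beta\<^sup>2 * (norm (w - w') + norm (\<delta> - \<delta>'))\<^sup>2"
    by (intro mult_left_mono) (auto simp: power2_sum)
  also have "\<dots> = (beta * (norm (w - w') + norm (\<delta> - \<delta>')))\<^sup>2"
    by (simp only: power_mult_distrib)
  finally show ?thesis
    by (rule power2_le_imp_le) (use beta_nonneg in simp)
qed

lemma gd_lip: "norm (gd w \<delta> z - gd w' \<delta> z) \<le> beta * norm (w - w')"
proof -
  have 1: "(norm (gw w \<delta> z - gw w' \<delta> z))\<^sup>2 + (norm (gd w \<delta> z - gd w' \<delta> z))\<^sup>2 \<le> beta\<^sup>2 * (norm (w - w'))\<^sup>2"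
    using A2[of w \<delta> z w' \<delta>] by simp
  have 2: "0 \<le> (norm (gw w \<delta> z - gw w' \<delta> z))\<^sup>2" by simp
  have "(norm (gd w \<delta> z - gd w' \<delta> z))\<^sup>2 \<le> beta\<^sup>2 * (norm (w - w'))\<^sup>2"
    using 1 2 by linarith
  also have "\<dots> = (beta * norm (w - w'))\<^sup>2"
    by (simp only: power_mult_distrib)
  finally show ?thesis
    by (rule power2_le_imp_le) (use beta_nonneg in simp)
qed

lemma proj_in: "proj_Delta eps x \<in> Delta eps"
  unfolding proj_Delta_def using eps_pos by (intro closest_point_in_set) auto

lemma proj_lip: "norm (proj_Delta eps x - proj_Delta eps y) \<le> norm (x - y)"
  using closest_point_lipschitz[of "Delta eps" x y] eps_pos
  unfolding proj_Delta_def dist_norm by auto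

lemma pi_lip:
  assumes "0 < psi" "1 / psi \<le> norm g" "1 / psi \<le> norm g'"
  shows "norm (pi_Delta eps g - pi_Delta eps g') \<le> eps * psi * norm (g - g')"
  using unit_diff[of "1/psi" g g' eps] assms eps_pos unfolding pi_Delta_def by (simp add: mult_ac)

lemma term_bound:
  assumes psi: "0 < psi" and a: "0 \<le> a"
    and g1: "1 / psi \<le> norm (gd w D z)" and g2: "1 / psi \<le> norm (gd w' D z)"
  shows "norm (gw w (proj_Delta eps (D + a *\<^sub>R pi_Delta eps (gd w D z))) z
             - gw w' (proj_Delta eps (D + a *\<^sub>R pi_Delta eps (gd w' D z))) z)
         \<le> beta * (1 + a * eps * psi * beta) * norm (w - w')"
proof -
  define \<delta> where "\<delta> = proj_Delta eps (D + a *\<^sub>R pi_Delta eps (gd w D z))"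
  define \<delta>' where "\<delta>' = proj_Delta eps (D + a *\<^sub>R pi_Delta eps (gd w' D z))"
  have "norm (\<delta> - \<delta>') \<le> norm ((D + a *\<^sub>R pi_Delta eps (gd w D z)) - (D + a *\<^sub>R pi_Delta eps (gd w' D z)))"
    unfolding \<delta>_def \<delta>'_def by (rule proj_lip)
  also have "\<dots> = a * norm (pi_Delta eps (gd w D z) - pi_Delta eps (gd w' D z))"
    using a by (simp add: scaleR_diff_right[symmetric])
  also have "\<dots> \<le> a * (eps * psi * norm (gd w D z - gd w' D z))"
    using a by (intro mult_left_mono pi_lip psi g1 g2) auto
  also have "\<dots> \<le> a * (eps * psi * (beta * norm (w - w')))"
    using a eps_pos psi by (intro mult_left_mono gd_lip) auto
  finally have dd: "norm (\<delta> - \<delta>') \<le> a * eps * psi * beta * norm (w - w')" by (simp add: mult_ac)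
  have "norm (gw w \<delta> z - gw w' \<delta>' z) \<le> beta * (norm (w - w') + norm (\<delta> - \<delta>'))"
    by (rule gw_lip)
  also have "\<dots> \<le> beta * (norm (w - w') + a * eps * psi * beta * norm (w - w'))"
    using dd beta_nonneg by (intro mult_left_mono) auto
  finally show ?thesis unfolding \<delta>_def \<delta>'_def by (simp add: algebra_simps)
qed


lemma step_bound:
  assumes psi: "0 < psi" and a: "0 \<le> a" and ad: "0 \<le> ad" and b: "1 \<le> b"
    and B: "finite B" "card B = b"
    and SS': "\<And>j. j \<noteq> s \<Longrightarrow> S j = S' j"
    and grad: "\<And>j. j \<in> B \<Longrightarrow> 1 / psi \<le> norm (gd w (D j) (S j)) \<and> 1 / psi \<le> norm (gd w' (D j) (S' j))"
  shows "norm (fast_step gw gd eps ad b S a w B D - fast_step gw gd eps ad b S' a w' B D)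
     \<le> (1 + a * beta * (1 + ad * eps * psi * beta)) * norm (w - w') + a / real b * (if s \<in> B then 2 * L else 0)"
proof -
  define K where "K = beta * (1 + ad * eps * psi * beta)"
  define X where "X j = gw w (proj_Delta eps (D j + ad *\<^sub>R pi_Delta eps (gd w (D j) (S j)))) (S j)" for j
  define Y where "Y j = gw w' (proj_Delta eps (D j + ad *\<^sub>R pi_Delta eps (gd w' (D j) (S' j)))) (S' j)" for j
  have K0: "0 \<le> K" unfolding K_def using beta_nonneg ad eps_pos psi by auto
  have tb: "norm (X j - Y j) \<le> K * norm (w - w') + (if j = s then 2 * L else 0)" if j: "j \<in> B" for j
  proof (cases "j = s")
    case True
    have "norm (X j - Y j) \<le> norm (X j) + norm (Y j)" by (rule norm_triangle_ineq4)
    also have "\<dots> \<le> L + L" unfolding X_def Y_def by (intro add_mono gw_bound proj_in)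
    finally show ?thesis using True K0 by (simp add: add_increasing)
  next
    case False
    have "norm (X j - Y j) \<le> K * norm (w - w')"
      unfolding X_def Y_def K_def SS'[OF False]
      using grad[OF j] SS'[OF False] by (intro term_bound psi ad) auto
    then show ?thesis using False by simp
  qed
  have "fast_step gw gd eps ad b S a w B D - fast_step gw gd eps ad b S' a w' B D
      = (w - w') - (a / real b) *\<^sub>R (\<Sum>j\<in>B. X j - Y j)"
    unfolding fast_step_def X_def Y_def by (simp add: sum_subtractf algebra_simps)
  also have "norm \<dots> \<le> norm (w - w') + (a / real b) * (\<Sum>j\<in>B. norm (X j - Y j))"
  proof -
    have "norm ((a / real b) *\<^sub>R (\<Sum>j\<in>B. X j - Y j)) = (a / real b) * norm (\<Sum>j\<in>B. X j - Y j)"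
      using a by simp
    also have "\<dots> \<le> (a / real b) * (\<Sum>j\<in>B. norm (X j - Y j))"
      using a by (intro mult_left_mono norm_sum) auto
    finally show ?thesis by (intro order.trans[OF norm_triangle_ineq4] add_left_mono)
  qed
  also have "\<dots> \<le> norm (w - w') + (a / real b) * (\<Sum>j\<in>B. K * norm (w - w') + (if j = s then 2 * L else 0))"
    using a by (intro add_left_mono mult_left_mono sum_mono tb) auto
  also have "(\<Sum>j\<in>B. K * norm (w - w') + (if j = s then 2 * L else 0)) = real b * (K * norm (w - w')) + (if s \<in> B then 2 * L else 0)"
    using B by (simp add: sum.distrib sum.delta')
  also have "norm (w - w') + (a / real b) * (real b * (K * norm (w - w')) + (if s \<in> B then 2 * L else 0))
     = (1 + a * K) * norm (w - w') + a / real b * (if s \<in> B then 2 * L else 0)"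
    using b by (simp add: field_simps)
  finally show ?thesis unfolding K_def by (simp add: mult.assoc)
qed

lemma step_diff_bound:
  assumes a: "0 \<le> a" and b: "1 \<le> b" and B: "finite B" "card B = b"
  shows "norm (fast_step gw gd eps ad b S a w B D - fast_step gw gd eps ad b S' a w' B D)
     \<le> norm (w - w') + 2 * a * L"
proof -
  define X where "X j = gw w (proj_Delta eps (D j + ad *\<^sub>R pi_Delta eps (gd w (D j) (S j)))) (S j)" for j
  define Y where "Y j = gw w' (proj_Delta eps (D j + ad *\<^sub>R pi_Delta eps (gd w' (D j) (S' j)))) (S' j)" for j
  have tb: "norm (X j - Y j) \<le> 2 * L" for j
  proof -
    have "norm (X j - Y j) \<le> norm (X j) + norm (Y j)" by (rule norm_triangle_ineq4)
    also have "\<dots> \<le> L + L" unfolding X_def Y_def by (intro add_mono gw_bound proj_in)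
    finally show ?thesis by simp
  qed
  have "fast_step gw gd eps ad b S a w B D - fast_step gw gd eps ad b S' a w' B D
      = (w - w') - (a / real b) *\<^sub>R (\<Sum>j\<in>B. X j - Y j)"
    unfolding fast_step_def X_def Y_def by (simp add: sum_subtractf algebra_simps)
  also have "norm \<dots> \<le> norm (w - w') + (a / real b) * (\<Sum>j\<in>B. norm (X j - Y j))"
  proof -
    have "norm ((a / real b) *\<^sub>R (\<Sum>j\<in>B. X j - Y j)) = (a / real b) * norm (\<Sum>j\<in>B. X j - Y j)"
      using a by simp
    also have "\<dots> \<le> (a / real b) * (\<Sum>j\<in>B. norm (X j - Y j))"
      using a by (intro mult_left_mono norm_sum) auto
    finally show ?thesis by (intro order.trans[OF norm_triangle_ineq4] add_left_mono)
  qed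
  also have "\<dots> \<le> norm (w - w') + (a / real b) * (\<Sum>j\<in>B. 2 * L)"
    using a by (intro add_left_mono mult_left_mono sum_mono tb) auto
  also have "\<dots> = norm (w - w') + 2 * a * L"
    using B b by simp
  finally show ?thesis .
qed

end


lemma prob_mem:
  assumes b: "1 \<le> b" "b \<le> n" and s: "s < n"
  shows "measure_pmf.prob (pmf_of_set {B. B \<subseteq> {..<n} \<and> card B = b}) {B. s \<in> B} = real b / real n"
proof -
  define U where "U = {B. B \<subseteq> {..<n} \<and> card B = b}"
  define V where "V = {C. C \<subseteq> {..<n} - {s} \<and> card C = b - 1}"
  have fU: "finite U" unfolding U_def by (rule finite_subset[of _ "Pow {..<n}"]) auto
  have neU: "U \<noteq> {}" proof -
    have "{..<b} \<in> U" unfolding U_def using b by auto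
    then show ?thesis by auto
  qed
  have cU: "card U = n choose b" unfolding U_def using n_subsets[of "{..<n}" b] by simp
  have cV: "card V = (n - 1) choose (b - 1)" unfolding V_def
    using n_subsets[of "{..<n} - {s}" "b - 1"] s by simp
  have eq: "U \<inter> {B. s \<in> B} = insert s ` V"
  proof (intro equalityI subsetI)
    fix B assume B: "B \<in> U \<inter> {B. s \<in> B}"
    then have fB: "finite B" unfolding U_def by (auto intro: finite_subset)
    have "B - {s} \<in> V" using B fB unfolding U_def V_def by auto
    moreover have "B = insert s (B - {s})" using B by auto
    ultimately show "B \<in> insert s ` V" by blast
  next
    fix B assume "B \<in> insert s ` V"
    then obtain C where C: "C \<in> V" "B = insert s C" by auto
    have fC: "finite C" using C unfolding V_def by (auto intro: finite_subset)
    have "s \<notin> C" using C unfolding V_def by auto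
    then have "card B = b" using C fC b unfolding V_def by simp
    then show "B \<in> U \<inter> {B. s \<in> B}" using C s unfolding U_def V_def by auto
  qed
  have inj: "inj_on (insert s) V"
    unfolding V_def by (intro inj_onI) (metis Diff_insert_absorb Diff_iff insertI1 subset_iff mem_Collect_eq)
  have cI: "card (U \<inter> {B. s \<in> B}) = (n - 1) choose (b - 1)"
    unfolding eq using card_image[OF inj] cV by simp
  have key: "b * (n choose b) = n * ((n - 1) choose (b - 1))"
    using b by (intro times_binomial_minus1_eq) auto
  have pos: "0 < n choose b" using b by simp
  have "measure_pmf.prob (pmf_of_set U) {B. s \<in> B} = real ((n - 1) choose (b - 1)) / real (n choose b)"
    using measure_pmf_of_set[OF neU fU] cI cU by simp
  also have "\<dots> = real b / real n"
  proof -
    have "real b * real (n choose b) = real n * real ((n - 1) choose (b - 1))"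
      using key by (metis of_nat_mult)
    then show ?thesis using pos b by (simp add: field_simps)
  qed
  finally show ?thesis unfolding U_def .
qed


lemma meas_sum_set:
  fixes F :: "nat \<Rightarrow> 'a \<Rightarrow> 'b::euclidean_space"
  assumes Bs: "Bs \<in> M \<rightarrow>\<^sub>M count_space UNIV" and F: "\<And>j. F j \<in> borel_measurable M"
  shows "(\<lambda>\<omega>. \<Sum>j\<in>Bs \<omega>. F j \<omega>) \<in> borel_measurable M"
proof -
  define N where "N B = (if finite B \<and> B \<noteq> {} then Suc (Max B) else 0)" for B :: "nat set"
  define G where "G i \<omega> = (\<Sum>j<i. if j \<in> Bs \<omega> then F j \<omega> else 0)" for i \<omega>
  have eq: "(\<Sum>j\<in>Bs \<omega>. F j \<omega>) = G (N (Bs \<omega>)) \<omega>" for \<omega>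
  proof (cases "finite (Bs \<omega>) \<and> Bs \<omega> \<noteq> {}")
    case True
    then have sub: "Bs \<omega> \<subseteq> {..<N (Bs \<omega>)}" unfolding N_def by (auto simp: less_Suc_eq_le)
    have "G (N (Bs \<omega>)) \<omega> = (\<Sum>j\<in>{..<N (Bs \<omega>)} \<inter> Bs \<omega>. F j \<omega>)"
      unfolding G_def by (rule sum.inter_restrict[symmetric]) simp
    also have "{..<N (Bs \<omega>)} \<inter> Bs \<omega> = Bs \<omega>" using sub by blast
    finally show ?thesis by simp
  next
    case False
    then show ?thesis unfolding N_def G_def by auto
  qed
  have pm: "Measurable.pred M (\<lambda>\<omega>. j \<in> Bs \<omega>)" for j
    using measurable_compose[OF Bs, of "\<lambda>B. j \<in> B" "count_space UNIV"] by simp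
  have Gm: "G i \<in> borel_measurable M" for i
    unfolding G_def using pm by (intro borel_measurable_sum measurable_If F) (auto simp: pred_def)
  have Nm: "(\<lambda>\<omega>. N (Bs \<omega>)) \<in> M \<rightarrow>\<^sub>M count_space UNIV"
    using measurable_compose[OF Bs, of N "count_space UNIV"] by simp
  have "(\<lambda>\<omega>. G (N (Bs \<omega>)) \<omega>) \<in> borel_measurable M"
    by (rule measurable_compose_countable[OF Gm Nm])
  then show ?thesis unfolding eq .
qed

lemma iter_meas:
  fixes gw :: "'w::euclidean_space \<Rightarrow> 'd::euclidean_space \<Rightarrow> 'z \<Rightarrow> 'w" and gd :: "'w \<Rightarrow> 'd \<Rightarrow> 'z \<Rightarrow> 'd"
  assumes cont: "\<And>z. continuous_on UNIV (\<lambda>p. (gw (fst p) (snd p) z, gd (fst p) (snd p) z))"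
    and eps: "0 < eps"
    and rvB: "\<And>k. k \<in> {1..T} \<Longrightarrow> Bs k \<in> M \<rightarrow>\<^sub>M count_space UNIV"
    and rvD: "\<And>k j. k \<in> {1..T} \<Longrightarrow> (\<lambda>\<omega>. Ds k \<omega> j) \<in> borel_measurable M"
  shows "k \<le> T \<Longrightarrow> (\<lambda>\<omega>. fast_iter gw gd eps ad b Z alpha w0 (\<lambda>i. Bs i \<omega>) (\<lambda>i. Ds i \<omega>) k) \<in> borel_measurable M"
proof (induction k)
  case 0 then show ?case by simp
next
  case (Suc k)
  define W where "W \<omega> = fast_iter gw gd eps ad b Z alpha w0 (\<lambda>i. Bs i \<omega>) (\<lambda>i. Ds i \<omega>) k" for \<omega>
  have Wm: "W \<in> borel_measurable M" unfolding W_def using Suc by simp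
  have kT: "Suc k \<in> {1..T}" using Suc by simp
  have cgw: "continuous_on UNIV (\<lambda>p. gw (fst p) (snd p) z)" for z
    using continuous_on_fst[OF cont[of z]] by simp
  have cgd: "continuous_on UNIV (\<lambda>p. gd (fst p) (snd p) z)" for z
    using continuous_on_snd[OF cont[of z]] by simp
  have mgw: "(\<lambda>\<omega>. gw (f \<omega>) (g \<omega>) z) \<in> borel_measurable M"
    if "f \<in> borel_measurable M" "g \<in> borel_measurable M" for f g z
    using borel_measurable_continuous_on[OF cgw[of z] borel_measurable_Pair[OF that]] by simp
  have mgd: "(\<lambda>\<omega>. gd (f \<omega>) (g \<omega>) z) \<in> borel_measurable M"
    if "f \<in> borel_measurable M" "g \<in> borel_measurable M" for f g z
    using borel_measurable_continuous_on[OF cgd[of z] borel_measurable_Pair[OF that]] by simp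
  have mproj: "(\<lambda>\<omega>. proj_Delta eps (f \<omega>)) \<in> borel_measurable M"
    if "f \<in> borel_measurable M" for f :: "'a \<Rightarrow> 'd"
    unfolding proj_Delta_def using eps
    by (intro borel_measurable_continuous_on[OF continuous_on_closest_point that]) auto
  have mpi: "(\<lambda>\<omega>. pi_Delta eps (f \<omega>)) \<in> borel_measurable M"
    if "f \<in> borel_measurable M" for f :: "'a \<Rightarrow> 'd"
    unfolding pi_Delta_def using that by measurable
  have F: "(\<lambda>\<omega>. gw (W \<omega>) (proj_Delta eps (Ds (Suc k) \<omega> j + ad *\<^sub>R pi_Delta eps (gd (W \<omega>) (Ds (Suc k) \<omega> j) (Z j)))) (Z j))
      \<in> borel_measurable M" for j
    using rvD[OF kT, of j] Wm
    by (intro mgw mproj mgd mpi borel_measurable_add borel_measurable_scaleR borel_measurable_const) auto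
  have S: "(\<lambda>\<omega>. \<Sum>j\<in>Bs (Suc k) \<omega>. gw (W \<omega>) (proj_Delta eps (Ds (Suc k) \<omega> j + ad *\<^sub>R pi_Delta eps (gd (W \<omega>) (Ds (Suc k) \<omega> j) (Z j)))) (Z j))
      \<in> borel_measurable M"
    by (rule meas_sum_set[OF rvB[OF kT] F])
  show ?case
    unfolding fast_iter.simps fast_step_def W_def[symmetric]
    using Wm S by (intro borel_measurable_diff borel_measurable_scaleR borel_measurable_const) auto
qed


theorem lemma7:
  fixes h :: "'w::euclidean_space \<Rightarrow> 'd::euclidean_space \<Rightarrow> 'z \<Rightarrow> real"
    and gw :: "'w \<Rightarrow> 'd \<Rightarrow> 'z \<Rightarrow> 'w"
    and gd :: "'w \<Rightarrow> 'd \<Rightarrow> 'z \<Rightarrow> 'd"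
    and L Lw beta eps psi a_delta :: real
    and alpha :: "nat \<Rightarrow> real"
    and n b s T t :: nat
    and S S' :: "nat \<Rightarrow> 'z"
    and w0 :: 'w
    and M :: "'a measure"
    and Bs :: "nat \<Rightarrow> 'a \<Rightarrow> nat set"
    and Ds :: "nat \<Rightarrow> 'a \<Rightarrow> nat \<Rightarrow> 'd"
  assumes A1: "\<And>z w w' \<delta> \<delta>'. \<delta> \<in> Delta eps \<Longrightarrow> \<delta>' \<in> Delta eps \<Longrightarrow>
        \<bar>h w \<delta> z - h w' \<delta>' z\<bar>\<^sup>2 \<le> L\<^sup>2 * ((norm (w - w'))\<^sup>2 + (norm (\<delta> - \<delta>'))\<^sup>2)"
    and A1w: "\<And>z w w' \<delta>. \<delta> \<in> Delta eps \<Longrightarrow> \<bar>h w \<delta> z - h w' \<delta> z\<bar> \<le> Lw * norm (w - w')"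
    and A2_deriv: "\<And>z w \<delta>. ((\<lambda>p. h (fst p) (snd p) z) has_derivative
           (\<lambda>p. inner (gw w \<delta> z) (fst p) + inner (gd w \<delta> z) (snd p))) (at (w, \<delta>))"
    and A2_cont: "\<And>z. continuous_on UNIV (\<lambda>p. (gw (fst p) (snd p) z, gd (fst p) (snd p) z))"
    and A2: "\<And>z w w' \<delta> \<delta>'.
        (norm (gw w \<delta> z - gw w' \<delta>' z))\<^sup>2 + (norm (gd w \<delta> z - gd w' \<delta>' z))\<^sup>2
          \<le> beta\<^sup>2 * ((norm (w - w'))\<^sup>2 + (norm (\<delta> - \<delta>'))\<^sup>2)"
    and L_nonneg: "0 \<le> L" and beta_nonneg: "0 \<le> beta"
    and eps_pos: "0 < eps" and psi_pos: "0 < psi"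
    and step_nonneg: "\<And>k. 0 \<le> alpha k" and a_delta_nonneg: "0 \<le> a_delta"
    and b_pos: "1 \<le> b" and b_le: "b \<le> n"
    and s_lt: "s < n" and S_S': "\<And>j. j \<noteq> s \<Longrightarrow> S j = S' j"
    and M: "prob_space M"
    and rv: "\<And>k. k \<in> {1..T} \<Longrightarrow> (\<lambda>\<omega>. (Bs k \<omega>, Ds k \<omega>)) \<in> measurable M (step_dist n b eps)"
    and dist: "\<And>k. k \<in> {1..T} \<Longrightarrow> distr M (step_dist n b eps) (\<lambda>\<omega>. (Bs k \<omega>, Ds k \<omega>)) = step_dist n b eps"
    and indep: "prob_space.indep_vars M (\<lambda>_. step_dist n b eps) (\<lambda>k \<omega>. (Bs k \<omega>, Ds k \<omega>)) {1..T}"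
    and grad_lb: "AE \<omega> in M. \<forall>k\<in>{1..T}. \<forall>j\<in>Bs k \<omega>.
        norm (gd (fast_iter gw gd eps a_delta b S alpha w0 (\<lambda>i. Bs i \<omega>) (\<lambda>i. Ds i \<omega>) (k - 1)) (Ds k \<omega> j) (S j)) \<ge> 1 / psi
      \<and> norm (gd (fast_iter gw gd eps a_delta b S' alpha w0 (\<lambda>i. Bs i \<omega>) (\<lambda>i. Ds i \<omega>) (k - 1)) (Ds k \<omega> j) (S' j)) \<ge> 1 / psi"
    and t_range: "t \<in> {1..T}"
  shows "(\<integral>\<omega>. norm (fast_iter gw gd eps a_delta b S alpha w0 (\<lambda>i. Bs i \<omega>) (\<lambda>i. Ds i \<omega>) t
                    - fast_iter gw gd eps a_delta b S' alpha w0 (\<lambda>i. Bs i \<omega>) (\<lambda>i. Ds i \<omega>) t) \<partial>M)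
         \<le> (1 + alpha t * beta * (1 + a_delta * eps * psi * beta)) *
             (\<integral>\<omega>. norm (fast_iter gw gd eps a_delta b S alpha w0 (\<lambda>i. Bs i \<omega>) (\<lambda>i. Ds i \<omega>) (t - 1)
                    - fast_iter gw gd eps a_delta b S' alpha w0 (\<lambda>i. Bs i \<omega>) (\<lambda>i. Ds i \<omega>) (t - 1)) \<partial>M)
           + 2 / real n * alpha t * L"
proof -
  interpret lem7ctx h gw gd L beta eps
    using A1 A2_deriv A2 L_nonneg beta_nonneg eps_pos by unfold_locales
  interpret P: prob_space M by (rule M)
  define U where "U = {B. B \<subseteq> {..<n} \<and> card B = b}"
  define p where "p = pmf_of_set U"
  define Q where "Q = (Pi\<^sub>M {..<n} (\<lambda>j. uniform_measure lborel (Delta eps)) :: (nat \<Rightarrow> 'd) measure)"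
  have fU: "finite U" unfolding U_def by (rule finite_subset[of _ "Pow {..<n}"]) auto
  have neU: "U \<noteq> {}"
  proof -
    have "{..<b} \<in> U" unfolding U_def using b_le by auto
    then show ?thesis by auto
  qed
  have setp: "set_pmf p = U" unfolding p_def using fU neU by (simp add: set_pmf_of_set)
  have Qprob: "prob_space Q" unfolding Q_def
  proof (intro prob_space_PiM prob_space_uniform_measure)
    have "emeasure lborel (Delta eps :: 'd set) = ennreal (unit_ball_vol (real DIM('d)) * eps ^ DIM('d))"
      using eps_pos by (intro emeasure_cball) simp
    moreover have "0 < unit_ball_vol (real DIM('d)) * eps ^ DIM('d)"
      using eps_pos by (intro mult_pos_pos unit_ball_vol_pos) auto
    ultimately show "emeasure lborel (Delta eps :: 'd set) \<noteq> 0"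
      using eps_pos unit_ball_vol_pos[of "real DIM('d)"] by (simp del: unit_ball_vol_pos)
    show "emeasure lborel (Delta eps :: 'd set) \<noteq> \<infinity>"
      using emeasure_lborel_cball_finite[of "0::'d" eps] by simp
  qed
  have sd: "step_dist n b eps = measure_pmf p \<Otimes>\<^sub>M Q"
    by (simp add: step_dist_def p_def Q_def U_def)
  have rv': "(\<lambda>\<omega>. (Bs k \<omega>, Ds k \<omega>)) \<in> M \<rightarrow>\<^sub>M measure_pmf p \<Otimes>\<^sub>M Q" if k: "k \<in> {1..T}" for k
    using rv[OF k] unfolding sd .
  have Bm0: "(\<lambda>\<omega>. Bs k \<omega>) \<in> M \<rightarrow>\<^sub>M measure_pmf p" if k: "k \<in> {1..T}" for k
    using measurable_compose[OF rv'[OF k] measurable_fst] by simp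
  have Bm: "Bs k \<in> M \<rightarrow>\<^sub>M count_space UNIV" if k: "k \<in> {1..T}" for k
    using Bm0[OF k] by (simp add: measurable_cong_sets[OF refl sets_measure_pmf_count_space])
  have DQ: "(\<lambda>\<omega>. Ds k \<omega>) \<in> M \<rightarrow>\<^sub>M Q" if k: "k \<in> {1..T}" for k
    using measurable_compose[OF rv'[OF k] measurable_snd] by simp
  have Dm: "(\<lambda>\<omega>. Ds k \<omega> j) \<in> borel_measurable M" if k: "k \<in> {1..T}" for k j
  proof (cases "j < n")
    case True
    have "(\<lambda>\<omega>. Ds k \<omega> j) \<in> M \<rightarrow>\<^sub>M uniform_measure lborel (Delta eps :: 'd set)"
      using measurable_compose[OF DQ[OF k, unfolded Q_def] measurable_component_singleton[of j]] True
      by simp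
    then show ?thesis
      by (simp add: measurable_cong_sets[OF refl sets_uniform_measure])
  next
    case False
    have "Ds k \<omega> j = undefined" if "\<omega> \<in> space M" for \<omega>
    proof -
      have "Ds k \<omega> \<in> space Q" using measurable_space[OF DQ[OF k] that] .
      then show ?thesis using False unfolding Q_def by (auto simp: space_PiM PiE_def extensional_def)
    qed
    then show ?thesis by (subst measurable_cong[where g = "\<lambda>_. undefined"]) auto
  qed
  have fstm: "fst \<in> (step_dist n b eps :: (nat set \<times> (nat \<Rightarrow> 'd)) measure) \<rightarrow>\<^sub>M measure_pmf p" unfolding sd by (rule measurable_fst)
  have distB: "distr M (measure_pmf p) (Bs k) = measure_pmf p" if k: "k \<in> {1..T}" for k
  proof -
    have "distr M (measure_pmf p) (Bs k) = distr M (measure_pmf p) (fst \<circ> (\<lambda>\<omega>. (Bs k \<omega>, Ds k \<omega>)))"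
      by (simp add: o_def)
    also have "\<dots> = distr (distr M (step_dist n b eps :: (nat set \<times> (nat \<Rightarrow> 'd)) measure) (\<lambda>\<omega>. (Bs k \<omega>, Ds k \<omega>))) (measure_pmf p) fst"
      by (rule distr_distr[OF fstm rv[OF k], symmetric])
    also have "\<dots> = distr (step_dist n b eps :: (nat set \<times> (nat \<Rightarrow> 'd)) measure) (measure_pmf p) fst" using dist[OF k] by simp
    also have "\<dots> = measure_pmf p" unfolding sd by (rule prob_space.distr_pair_fst[OF Qprob])
    finally show ?thesis .
  qed
  have AEB: "AE \<omega> in M. Bs k \<omega> \<in> U" if k: "k \<in> {1..T}" for k
  proof -
    have "AE x in measure_pmf p. x \<in> U" using setp by (simp add: AE_measure_pmf_iff)
    then have "AE x in distr M (measure_pmf p) (Bs k). x \<in> U" by (subst distB[OF k])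
    then show ?thesis by (subst (asm) AE_distr_iff[OF Bm0[OF k]]) auto
  qed
  have AEall: "AE \<omega> in M. \<forall>k\<in>{1..T}. Bs k \<omega> \<in> U"
    using AEB by (intro AE_ball_countable') auto
  have tT: "t \<in> {1..T}" by (rule t_range)
  define A where "A = {\<omega> \<in> space M. s \<in> Bs t \<omega>}"
  have Asets: "A \<in> sets M"
  proof -
    have "A = Bs t -` {B. s \<in> B} \<inter> space M" unfolding A_def by auto
    then show ?thesis using measurable_sets[OF Bm[OF tT], of "{B. s \<in> B}"] by simp
  qed
  have probA: "measure M A = real b / real n"
  proof -
    have "measure (distr M (measure_pmf p) (Bs t)) {B. s \<in> B} = measure M (Bs t -` {B. s \<in> B} \<inter> space M)"
      by (rule measure_distr[OF Bm0[OF tT]]) simp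
    moreover have "Bs t -` {B. s \<in> B} \<inter> space M = A" unfolding A_def by auto
    moreover have "measure (measure_pmf p) {B. s \<in> B} = real b / real n"
      unfolding p_def U_def using b_pos b_le s_lt by (rule prob_mem)
    ultimately show ?thesis using distB[OF tT] by simp
  qed
  define it where "it Z k \<omega> = fast_iter gw gd eps a_delta b Z alpha w0 (\<lambda>i. Bs i \<omega>) (\<lambda>i. Ds i \<omega>) k" for Z k \<omega>
  have itm: "it Z k \<in> borel_measurable M" if "k \<le> T" for Z k
    unfolding it_def using that
    by (intro iter_meas[where T = T] A2_cont eps_pos Bm Dm) auto
  define d where "d k \<omega> = norm (it S k \<omega> - it S' k \<omega>)" for k \<omega>
  have dm: "d k \<in> borel_measurable M" if "k \<le> T" for k
    unfolding d_def using itm[OF that] by measurable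
  have dbound: "AE \<omega> in M. \<forall>k\<le>T. d k \<omega> \<le> (\<Sum>i\<in>{1..k}. 2 * alpha i * L)"
    using AEall
  proof (rule eventually_mono)
    fix \<omega> assume H: "\<forall>k\<in>{1..T}. Bs k \<omega> \<in> U"
    show "\<forall>k\<le>T. d k \<omega> \<le> (\<Sum>i\<in>{1..k}. 2 * alpha i * L)"
    proof (intro allI impI)
      fix k show "k \<le> T \<Longrightarrow> d k \<omega> \<le> (\<Sum>i\<in>{1..k}. 2 * alpha i * L)"
      proof (induction k)
        case 0 then show ?case by (simp add: d_def it_def)
      next
        case (Suc k)
        have "Bs (Suc k) \<omega> \<in> U" using H Suc.prems by auto
        then have fB: "finite (Bs (Suc k) \<omega>)" "card (Bs (Suc k) \<omega>) = b"
          unfolding U_def by (auto intro: finite_subset)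
        have "d (Suc k) \<omega> \<le> d k \<omega> + 2 * alpha (Suc k) * L"
          unfolding d_def it_def fast_iter.simps
          by (rule step_diff_bound[OF step_nonneg b_pos fB])
        also have "\<dots> \<le> (\<Sum>i\<in>{1..k}. 2 * alpha i * L) + 2 * alpha (Suc k) * L"
          using Suc by simp
        also have "\<dots> = (\<Sum>i\<in>{1..Suc k}. 2 * alpha i * L)" by simp
        finally show ?case .
      qed
    qed
  qed
  have dint: "integrable M (d k)" if k: "k \<le> T" for k
  proof (rule P.integrable_const_bound[where B = "\<Sum>i\<in>{1..k}. 2 * alpha i * L"])
    show "AE x in M. norm (d k x) \<le> (\<Sum>i\<in>{1..k}. 2 * alpha i * L)"
      using dbound by (rule eventually_mono) (use k in \<open>auto simp: d_def\<close>)
    show "d k \<in> borel_measurable M" by (rule dm[OF k])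
  qed
  define c where "c = alpha t * beta * (1 + a_delta * eps * psi * beta)"
  define K where "K = alpha t / real b * (2 * L)"
  have t1: "t = Suc (t - 1)" using tT by simp
  have itstep: "it Z t \<omega> = fast_step gw gd eps a_delta b Z (alpha t) (it Z (t - 1) \<omega>) (Bs t \<omega>) (Ds t \<omega>)" for Z \<omega>
    unfolding it_def using tT by (cases t) auto
  have pw: "AE \<omega> in M. d t \<omega> \<le> (1 + c) * d (t - 1) \<omega> + K * indicator A \<omega>"
    using AEall grad_lb AE_space
  proof (rule AE_mp[OF AE_conjI[OF AE_conjI]], intro AE_I2 impI, elim conjE)
    fix \<omega> assume H: "\<forall>k\<in>{1..T}. Bs k \<omega> \<in> U" and sp: "\<omega> \<in> space M"
      and G: "\<forall>k\<in>{1..T}. \<forall>j\<in>Bs k \<omega>.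
        norm (gd (fast_iter gw gd eps a_delta b S alpha w0 (\<lambda>i. Bs i \<omega>) (\<lambda>i. Ds i \<omega>) (k - 1)) (Ds k \<omega> j) (S j)) \<ge> 1 / psi
      \<and> norm (gd (fast_iter gw gd eps a_delta b S' alpha w0 (\<lambda>i. Bs i \<omega>) (\<lambda>i. Ds i \<omega>) (k - 1)) (Ds k \<omega> j) (S' j)) \<ge> 1 / psi"
    have "Bs t \<omega> \<in> U" using H tT by auto
    then have fB: "finite (Bs t \<omega>)" "card (Bs t \<omega>) = b"
      unfolding U_def by (auto intro: finite_subset)
    have gr: "\<And>j. j \<in> Bs t \<omega> \<Longrightarrow> 1 / psi \<le> norm (gd (it S (t - 1) \<omega>) (Ds t \<omega> j) (S j))
        \<and> 1 / psi \<le> norm (gd (it S' (t - 1) \<omega>) (Ds t \<omega> j) (S' j))"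
      using G tT unfolding it_def by auto
    have "d t \<omega> \<le> (1 + c) * d (t - 1) \<omega> + alpha t / real b * (if s \<in> Bs t \<omega> then 2 * L else 0)"
      unfolding d_def itstep c_def
      by (rule step_bound[OF psi_pos step_nonneg a_delta_nonneg b_pos fB S_S' gr])
    also have "alpha t / real b * (if s \<in> Bs t \<omega> then 2 * L else 0) = K * indicator A \<omega>"
      unfolding K_def A_def using sp by (simp add: indicator_def)
    finally show "d t \<omega> \<le> (1 + c) * d (t - 1) \<omega> + K * indicator A \<omega>" .
  qed
  have tT': "t \<le> T" "t - 1 \<le> T" using tT by auto
  have intI: "integrable M (indicat_real A)"
    using Asets by (intro integrable_real_indicator) (auto simp: P.emeasure_eq_measure)
  have "(\<integral>\<omega>. d t \<omega> \<partial>M) \<le> (\<integral>\<omega>. (1 + c) * d (t - 1) \<omega> + K * indicator A \<omega> \<partial>M)"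
    using dint[OF tT'(1)] dint[OF tT'(2)] intI pw by (intro integral_mono_AE) auto
  also have "\<dots> = (1 + c) * (\<integral>\<omega>. d (t - 1) \<omega> \<partial>M) + K * measure M A"
    using dint[OF tT'(2)] intI Asets
    by (simp add: integral_add integral_mult_right_zero integral_indicator Int_absorb2 sets.sets_into_space)
  also have "K * measure M A = 2 / real n * alpha t * L"
    unfolding K_def probA using b_pos by (simp add: field_simps)
  finally show ?thesis unfolding d_def it_def c_def .
qed

end
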